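(* Let $n\ge 2d$. The cone $\Sigma^{S'}_{n,2d}$ of symmetric forms that are sums of squares of forms in $T$ is full-dimensional in $\mathbb{R}^{\pi(2d)}$ (identified with the space $H^S_{n,2d}$ of symmetric forms of degree $2d$ in $n$ variables via coefficients in the basis $\{p^{(n)}_\lambda:\lambda\vdash 2d\}$).
   Context: $p^{(n)}_i=\frac1n(x_1^i+\dots+x_n^i)$, $p^{(n)}_\lambda=\prod_i p^{(n)}_{\lambda_i}$; $\pi(k)$ is the number of partitions of $k$. $H_{n,d}$ is the space of real forms of degree $d$ in $n$ variables, $H^S_{n,k}$ the symmetric forms of degree $k$; $\mathcal{S}_n$ acts by permuting variables. $T\subseteq H_{n,d}$ is the $\mathcal{S}_n$-submodule generated by $H^S_{n,d}$ together with all forms $(x_1^a-x_2^a)g$ with $a\in\{1,\dots,d\}$ and $g\in H^S_{n,d-a}$. *)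

theory Defs
  imports Complex_Main "HOL-Combinatorics.Permutations"
begin

text \<open>Points of R^n are functions x :: nat => real; the variables are x 0, ..., x (n-1)
  (so the paper's x_1, x_2 are x 0, x 1). Real forms are identified with the polynomial
  functions they induce (faithful over the reals).\<close>

definition monomial_exps :: "nat \<Rightarrow> nat \<Rightarrow> (nat \<Rightarrow> nat) set" where
  "monomial_exps n d = {\<alpha>. (\<forall>i\<ge>n. \<alpha> i = 0) \<and> (\<Sum>i<n. \<alpha> i) = d}"

definition monom_fun :: "nat \<Rightarrow> (nat \<Rightarrow> nat) \<Rightarrow> (nat \<Rightarrow> real) \<Rightarrow> real" where
  "monom_fun n \<alpha> x = (\<Prod>i<n. x i ^ \<alpha> i)"

definition forms :: "nat \<Rightarrow> nat \<Rightarrow> ((nat \<Rightarrow> real) \<Rightarrow> real) set" where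
  "forms n d = {f. \<exists>c. f = (\<lambda>x. \<Sum>\<alpha>\<in>monomial_exps n d. c \<alpha> * monom_fun n \<alpha> x)}"

definition sym_forms :: "nat \<Rightarrow> nat \<Rightarrow> ((nat \<Rightarrow> real) \<Rightarrow> real) set" where
  "sym_forms n d = {f \<in> forms n d. \<forall>\<sigma>. \<sigma> permutes {..<n} \<longrightarrow> (\<forall>x. f (x \<circ> \<sigma>) = f x)}"

definition Tgens :: "nat \<Rightarrow> nat \<Rightarrow> ((nat \<Rightarrow> real) \<Rightarrow> real) set" where
  "Tgens n d = sym_forms n d \<union>
     {f. \<exists>a g. a \<in> {1..d} \<and> g \<in> sym_forms n (d - a) \<and> f = (\<lambda>x. (x 0 ^ a - x 1 ^ a) * g x)}"

definition Tsub :: "nat \<Rightarrow> nat \<Rightarrow> ((nat \<Rightarrow> real) \<Rightarrow> real) set" where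
  "Tsub n d = {f. \<exists>(m::nat) c \<sigma> g. (\<forall>i<m. g i \<in> Tgens n d \<and> \<sigma> i permutes {..<n}) \<and>
       f = (\<lambda>x. \<Sum>i<m. c i * g i (x \<circ> \<sigma> i))}"

definition sos_T_cone :: "nat \<Rightarrow> nat \<Rightarrow> ((nat \<Rightarrow> real) \<Rightarrow> real) set" where
  "sos_T_cone n d = {f \<in> sym_forms n (2*d). \<exists>(m::nat) t. (\<forall>i<m. t i \<in> Tsub n d) \<and>
       f = (\<lambda>x. \<Sum>i<m. (t i x)^2)}"

definition pmean :: "nat \<Rightarrow> nat \<Rightarrow> (nat \<Rightarrow> real) \<Rightarrow> real" where
  "pmean n k x = (1 / real n) * (\<Sum>i<n. x i ^ k)"

definition pmean_part :: "nat \<Rightarrow> nat list \<Rightarrow> (nat \<Rightarrow> real) \<Rightarrow> real" where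
  "pmean_part n lam x = prod_list (map (\<lambda>k. pmean n k x) lam)"

definition partitions_of :: "nat \<Rightarrow> nat list set" where
  "partitions_of k = {lam. sorted_wrt (\<ge>) lam \<and> 0 \<notin> set lam \<and> sum_list lam = k}"

end

theory Submission imports Defs begin

lemma finite_mexps: "finite (monomial_exps n d)"
proof -
  have "monomial_exps n d \<subseteq> {f. \<forall>x. (x \<in> {..<n} \<longrightarrow> f x \<in> {..d}) \<and> (x \<notin> {..<n} \<longrightarrow> f x = 0)}"
  proof
    fix \<alpha> assume a: "\<alpha> \<in> monomial_exps n d"
    have "\<alpha> x \<le> d" if "x < n" for x
    proof -
      have "\<alpha> x \<le> (\<Sum>i<n. \<alpha> i)" using that by (intro member_le_sum) auto
      thus ?thesis using a by (simp add: monomial_exps_def)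
    qed
    thus "\<alpha> \<in> {f. \<forall>x. (x \<in> {..<n} \<longrightarrow> f x \<in> {..d}) \<and> (x \<notin> {..<n} \<longrightarrow> f x = 0)}"
      using a by (auto simp: monomial_exps_def)
  qed
  thus ?thesis by (rule finite_subset) (intro finite_set_of_finite_funs; simp)
qed

lemma forms_gen:
  assumes "finite I" "\<forall>i\<in>I. h i \<in> monomial_exps n d"
  shows "(\<lambda>x. \<Sum>i\<in>I. a i * monom_fun n (h i) x) \<in> forms n d"
proof -
  let ?M = "monomial_exps n d"
  define c where "c \<gamma> = (\<Sum>i\<in>{i. i \<in> I \<and> h i = \<gamma>}. a i)" for \<gamma>
  have "(\<Sum>\<gamma>\<in>?M. c \<gamma> * monom_fun n \<gamma> x) = (\<Sum>i\<in>I. a i * monom_fun n (h i) x)" for x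
  proof -
    have "(\<Sum>\<gamma>\<in>?M. c \<gamma> * monom_fun n \<gamma> x) = (\<Sum>\<gamma>\<in>?M. \<Sum>i\<in>{i. i \<in> I \<and> h i = \<gamma>}. a i * monom_fun n (h i) x)"
      unfolding c_def by (auto simp: sum_distrib_right intro!: sum.cong)
    also have "\<dots> = (\<Sum>i\<in>I. a i * monom_fun n (h i) x)"
      by (rule sum.group) (use assms finite_mexps in auto)
    finally show ?thesis .
  qed
  thus ?thesis unfolding forms_def by (intro CollectI exI[of _ c]) auto
qed

lemma forms_elim:
  assumes "f \<in> forms n d"
  obtains c where "f = (\<lambda>x. \<Sum>\<alpha>\<in>monomial_exps n d. c \<alpha> * monom_fun n \<alpha> x)"
  using assms unfolding forms_def by auto

lemma monom_add: "monom_fun n (\<lambda>i. \<alpha> i + \<beta> i) x = monom_fun n \<alpha> x * monom_fun n \<beta> x"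
  by (simp add: monom_fun_def power_add prod.distrib)

lemma mexps_add: "\<alpha> \<in> monomial_exps n d \<Longrightarrow> \<beta> \<in> monomial_exps n e \<Longrightarrow> (\<lambda>i. \<alpha> i + \<beta> i) \<in> monomial_exps n (d+e)"
  by (simp add: monomial_exps_def sum.distrib)

lemma forms_mult:
  assumes "f \<in> forms n d" "g \<in> forms n e"
  shows "(\<lambda>x. f x * g x) \<in> forms n (d+e)"
proof -
  obtain c where c: "f = (\<lambda>x. \<Sum>\<alpha>\<in>monomial_exps n d. c \<alpha> * monom_fun n \<alpha> x)" using assms(1) by (rule forms_elim)
  obtain c' where c': "g = (\<lambda>x. \<Sum>\<alpha>\<in>monomial_exps n e. c' \<alpha> * monom_fun n \<alpha> x)" using assms(2) by (rule forms_elim)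
  let ?I = "monomial_exps n d \<times> monomial_exps n e"
  have "(\<lambda>x. f x * g x) = (\<lambda>x. \<Sum>p\<in>?I. (c (fst p) * c' (snd p)) * monom_fun n (\<lambda>i. fst p i + snd p i) x)"
  proof
    fix x
    have "f x * g x = (\<Sum>\<alpha>\<in>monomial_exps n d. \<Sum>\<beta>\<in>monomial_exps n e. (c \<alpha> * c' \<beta>) * monom_fun n (\<lambda>i. \<alpha> i + \<beta> i) x)"
      unfolding c c' sum_product monom_add by (rule sum.cong[OF refl], rule sum.cong[OF refl], simp add: mult_ac)
    also have "\<dots> = (\<Sum>p\<in>?I. (c (fst p) * c' (snd p)) * monom_fun n (\<lambda>i. fst p i + snd p i) x)"
      by (simp add: sum.cartesian_product split_beta)
    finally show "f x * g x = (\<Sum>p\<in>?I. (c (fst p) * c' (snd p)) * monom_fun n (\<lambda>i. fst p i + snd p i) x)" .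
  qed
  also have "\<dots> \<in> forms n (d+e)"
    by (rule forms_gen) (auto simp: finite_mexps intro: mexps_add)
  finally show ?thesis .
qed

lemma forms_add:
  assumes "f \<in> forms n d" "g \<in> forms n d"
  shows "(\<lambda>x. f x + g x) \<in> forms n d"
proof -
  obtain c where c: "f = (\<lambda>x. \<Sum>\<alpha>\<in>monomial_exps n d. c \<alpha> * monom_fun n \<alpha> x)" using assms(1) by (rule forms_elim)
  obtain c' where c': "g = (\<lambda>x. \<Sum>\<alpha>\<in>monomial_exps n d. c' \<alpha> * monom_fun n \<alpha> x)" using assms(2) by (rule forms_elim)
  show ?thesis unfolding forms_def c c'
    by (intro CollectI exI[of _ "\<lambda>\<alpha>. c \<alpha> + c' \<alpha>"]) (auto simp: sum.distrib algebra_simps)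
qed

lemma forms_scale:
  assumes "f \<in> forms n d"
  shows "(\<lambda>x. r * f x) \<in> forms n d"
proof -
  obtain c where c: "f = (\<lambda>x. \<Sum>\<alpha>\<in>monomial_exps n d. c \<alpha> * monom_fun n \<alpha> x)" using assms(1) by (rule forms_elim)
  show ?thesis unfolding forms_def c
    by (intro CollectI exI[of _ "\<lambda>\<alpha>. r * c \<alpha>"]) (auto simp: sum_distrib_left algebra_simps)
qed

lemma forms_zero: "(\<lambda>x. 0) \<in> forms n d"
  unfolding forms_def by (intro CollectI exI[of _ "\<lambda>_. 0"]) auto

lemma forms_sum:
  assumes "\<And>j. j \<in> J \<Longrightarrow> f j \<in> forms n d"
  shows "(\<lambda>x. \<Sum>j\<in>J. f j x) \<in> forms n d"
  using assms
proof (induction J rule: infinite_finite_induct)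
  case (infinite A) then show ?case by (simp add: forms_zero)
next
  case empty then show ?case by (simp add: forms_zero)
next
  case (insert a A) then show ?case by (simp add: forms_add)
qed

lemma forms_one: "(\<lambda>x. 1) \<in> forms n 0"
proof -
  have "(\<lambda>x. \<Sum>i\<in>{()}. 1 * monom_fun n (\<lambda>_. 0) x) \<in> forms n 0"
    by (rule forms_gen) (auto simp: monomial_exps_def)
  thus ?thesis by (simp add: monom_fun_def)
qed

lemma forms_var: assumes "i < n" shows "(\<lambda>x. x i ^ k) \<in> forms n k"
proof -
  have "(\<lambda>x. \<Sum>j\<in>{()}. 1 * monom_fun n (\<lambda>j. if j = i then k else 0) x) \<in> forms n k"
    by (rule forms_gen) (use assms in \<open>auto simp: monomial_exps_def\<close>)
  moreover have "monom_fun n (\<lambda>j. if j = i then k else 0) x = x i ^ k" for x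
    unfolding monom_fun_def using assms
    by (simp add: prod.delta' power_0 if_distrib[of "\<lambda>e. x _ ^ e"] cong: if_cong)
  ultimately show ?thesis by simp
qed


lemma pmean_form: "pmean n k \<in> forms n k"
proof -
  have "(\<lambda>x. (1 / real n) * (\<lambda>x. \<Sum>i<n. x i ^ k) x) \<in> forms n k"
    by (intro forms_scale forms_sum forms_var) auto
  thus ?thesis by (simp add: pmean_def[abs_def])
qed

lemma pp_Cons: "pmean_part n (k # l) = (\<lambda>x. pmean n k x * pmean_part n l x)"
  by (auto simp: pmean_part_def)

lemma pp_Nil: "pmean_part n [] = (\<lambda>x. 1)"
  by (auto simp: pmean_part_def)

lemma pp_append: "pmean_part n (l1 @ l2) x = pmean_part n l1 x * pmean_part n l2 x"
  by (simp add: pmean_part_def)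

lemma pp_form: "pmean_part n l \<in> forms n (sum_list l)"
proof (induction l)
  case Nil then show ?case by (simp add: pp_Nil forms_one)
next
  case (Cons k l)
  show ?case unfolding pp_Cons using forms_mult[OF pmean_form Cons] by simp
qed

lemma pmean_perm: assumes "\<sigma> permutes {..<n}" shows "pmean n k (x \<circ> \<sigma>) = pmean n k x"
proof -
  have "(\<Sum>i<n. x (\<sigma> i) ^ k) = (\<Sum>i<n. x i ^ k)"
    by (rule sum.reindex_bij_betw[OF permutes_imp_bij[OF assms], of "\<lambda>i. x i ^ k"])
  thus ?thesis by (simp add: pmean_def)
qed

lemma pp_perm: assumes "\<sigma> permutes {..<n}" shows "pmean_part n l (x \<circ> \<sigma>) = pmean_part n l x"
  by (induction l) (simp_all add: pp_Nil pp_Cons pmean_perm[OF assms, unfolded comp_def])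

lemma pp_sym: "pmean_part n l \<in> sym_forms n (sum_list l)"
  unfolding sym_forms_def using pp_form pp_perm by blast

lemma sym_add: "f \<in> sym_forms n d \<Longrightarrow> g \<in> sym_forms n d \<Longrightarrow> (\<lambda>x. f x + g x) \<in> sym_forms n d"
  unfolding sym_forms_def by (auto intro: forms_add)

lemma sym_scale: "f \<in> sym_forms n d \<Longrightarrow> (\<lambda>x. r * f x) \<in> sym_forms n d"
  unfolding sym_forms_def by (auto intro: forms_scale)

lemma sym_sum: assumes "\<And>j. j \<in> J \<Longrightarrow> f j \<in> sym_forms n d"
  shows "(\<lambda>x. \<Sum>j\<in>J. f j x) \<in> sym_forms n d"
  using assms unfolding sym_forms_def by (auto intro!: forms_sum sum.cong)

lemma pp_mset: assumes "mset l = mset l'" shows "pmean_part n l = pmean_part n l'"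
proof
  fix x
  have "pmean_part n l x = prod_mset (image_mset (\<lambda>k. pmean n k x) (mset l))" for l
    unfolding pmean_part_def by (simp add: prod_mset_prod_list[symmetric])
  thus "pmean_part n l x = pmean_part n l' x" using assms by simp
qed

lemma length_le_sum: "0 \<notin> set l \<Longrightarrow> length l \<le> sum_list l"
  by (induction l) auto

lemma finite_partitions: "finite (partitions_of k)"
proof -
  have "partitions_of k \<subseteq> {xs. set xs \<subseteq> {..k} \<and> length xs \<le> k}"
  proof
    fix l assume l: "l \<in> partitions_of k"
    have "\<forall>y\<in>set l. y \<le> k" using l member_le_sum_list[of _ l] by (auto simp: partitions_of_def)
    thus "l \<in> {xs. set xs \<subseteq> {..k} \<and> length xs \<le> k}" using l length_le_sum[of l]
      by (auto simp: partitions_of_def)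
  qed
  thus ?thesis by (rule finite_subset) (rule finite_lists_length_le, simp)
qed

lemma sort_partition: assumes "0 \<notin> set l" "sum_list l = k"
  shows "rev (sort l) \<in> partitions_of k" "mset (rev (sort l)) = mset l"
proof -
  have "sorted_wrt (\<le>) (sort l)" using sorted_sort[of l] by simp
  hence "sorted_wrt (\<ge>) (rev (sort l))" by (simp add: sorted_wrt_rev)
  moreover have "sum_list (rev (sort l)) = k" using assms
    by (metis mset_rev mset_sort sum_mset_sum_list)
  ultimately show "rev (sort l) \<in> partitions_of k" using assms by (auto simp: partitions_of_def)
  show "mset (rev (sort l)) = mset l" by simp
qed


definition Wset :: "nat \<Rightarrow> nat \<Rightarrow> ((nat \<Rightarrow> real) \<Rightarrow> real) set" where
  "Wset n d = {f. \<exists>e. f = (\<lambda>x. \<Sum>lam\<in>partitions_of (2*d). e lam * pmean_part n lam x)}"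

lemma W_add: assumes "f \<in> Wset n d" "g \<in> Wset n d" shows "(\<lambda>x. f x + g x) \<in> Wset n d"
proof -
  obtain e where e: "f = (\<lambda>x. \<Sum>lam\<in>partitions_of (2*d). e lam * pmean_part n lam x)" using assms(1) Wset_def by blast
  obtain e' where e': "g = (\<lambda>x. \<Sum>lam\<in>partitions_of (2*d). e' lam * pmean_part n lam x)" using assms(2) Wset_def by blast
  show ?thesis unfolding Wset_def e e'
    by (intro CollectI exI[of _ "\<lambda>l. e l + e' l"]) (simp add: sum.distrib algebra_simps)
qed

lemma W_scale: assumes "f \<in> Wset n d" shows "(\<lambda>x. r * f x) \<in> Wset n d"
proof -
  obtain e where e: "f = (\<lambda>x. \<Sum>lam\<in>partitions_of (2*d). e lam * pmean_part n lam x)" using assms(1) Wset_def by blast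
  show ?thesis unfolding Wset_def e
    by (intro CollectI exI[of _ "\<lambda>l. r * e l"]) (simp add: sum_distrib_left algebra_simps)
qed

lemma W_zero: "(\<lambda>x. 0) \<in> Wset n d"
  unfolding Wset_def by (auto intro!: exI[of _ "\<lambda>l. 0"])

lemma W_diff: "f \<in> Wset n d \<Longrightarrow> g \<in> Wset n d \<Longrightarrow> (\<lambda>x. f x - g x) \<in> Wset n d"
  using W_add[of f n d "\<lambda>x. (-1) * g x"] W_scale[of g n d "-1"] by simp

lemma W_sum: assumes "\<And>j. j \<in> J \<Longrightarrow> f j \<in> Wset n d"
  shows "(\<lambda>x. \<Sum>j\<in>J. f j x) \<in> Wset n d"
  using assms
proof (induction J rule: infinite_finite_induct)
  case (infinite A) then show ?case by (simp add: W_zero)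
next
  case empty then show ?case by (simp add: W_zero)
next
  case (insert a A) then show ?case by (simp add: W_add)
qed

lemma W_part: assumes "lam \<in> partitions_of (2*d)" shows "pmean_part n lam \<in> Wset n d"
proof -
  have eq: "(\<lambda>x. \<Sum>l\<in>partitions_of (2*d). (if l = lam then 1 else 0) * pmean_part n l x) = pmean_part n lam"
  proof
    fix x
    have "(\<Sum>l\<in>partitions_of (2*d). (if l = lam then 1 else 0) * pmean_part n l x) =
          (\<Sum>l\<in>partitions_of (2*d). (if l = lam then pmean_part n l x else 0))"
      by (rule sum.cong) auto
    also have "\<dots> = pmean_part n lam x" using assms finite_partitions by (simp add: sum.delta')
    finally show "(\<Sum>l\<in>partitions_of (2*d). (if l = lam then 1 else 0) * pmean_part n l x) = pmean_part n lam x" .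
  qed
  show ?thesis unfolding Wset_def by (rule CollectI, rule exI[of _ "\<lambda>l. if l = lam then 1 else 0"], rule eq[symmetric])
qed

lemma W_list: assumes "0 \<notin> set l" "sum_list l = 2*d" shows "pmean_part n l \<in> Wset n d"
  using W_part[OF sort_partition(1)[OF assms]] pp_mset[OF sort_partition(2)[OF assms]] by simp

lemma Tsub_Tgens: "g \<in> Tgens n d \<Longrightarrow> g \<in> Tsub n d"
  unfolding Tsub_def
  by (intro CollectI exI[of _ "1::nat"] exI[of _ "\<lambda>_. 1"] exI[of _ "\<lambda>_. id"] exI[of _ "\<lambda>_. g"])
     (auto simp: permutes_id)

lemma Tsub_zero: "(\<lambda>x. 0) \<in> Tsub n d"
  unfolding Tsub_def by (intro CollectI exI[of _ "0::nat"]) auto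

lemma Tsub_scale: assumes "t \<in> Tsub n d" shows "(\<lambda>x. r * t x) \<in> Tsub n d"
proof -
  obtain m and c :: "nat \<Rightarrow> real" and \<sigma> g where h: "\<forall>i<m. g i \<in> Tgens n d \<and> \<sigma> i permutes {..<n}"
    "t = (\<lambda>x. \<Sum>i<m. c i * g i (x \<circ> \<sigma> i))" using assms unfolding Tsub_def by blast
  show ?thesis unfolding Tsub_def
    by (intro CollectI exI[of _ m] exI[of _ "\<lambda>i. r * c i"] exI[of _ \<sigma>] exI[of _ g])
       (use h in \<open>auto simp: sum_distrib_left mult_ac\<close>)
qed

definition SQ :: "nat \<Rightarrow> nat \<Rightarrow> ((nat \<Rightarrow> real) \<Rightarrow> real) \<Rightarrow> bool" where
  "SQ n d f \<longleftrightarrow> (\<exists>ts. set ts \<subseteq> Tsub n d \<and> f = (\<lambda>x. \<Sum>t\<leftarrow>ts. (t x)^2))"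

lemma SQ_zero: "SQ n d (\<lambda>x. 0)"
  unfolding SQ_def by (intro exI[of _ "[]"]) auto

lemma SQ_sq: "t \<in> Tsub n d \<Longrightarrow> SQ n d (\<lambda>x. (t x)^2)"
  unfolding SQ_def by (intro exI[of _ "[t]"]) auto

lemma SQ_add: assumes "SQ n d f" "SQ n d g" shows "SQ n d (\<lambda>x. f x + g x)"
proof -
  obtain ts where "set ts \<subseteq> Tsub n d" "f = (\<lambda>x. \<Sum>t\<leftarrow>ts. (t x)^2)" using assms(1) SQ_def by blast
  moreover obtain us where "set us \<subseteq> Tsub n d" "g = (\<lambda>x. \<Sum>t\<leftarrow>us. (t x)^2)" using assms(2) SQ_def by blast
  ultimately show ?thesis unfolding SQ_def by (intro exI[of _ "ts @ us"]) auto
qed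

lemma SQ_scale: assumes "SQ n d f" "r \<ge> 0" shows "SQ n d (\<lambda>x. r * f x)"
proof -
  obtain ts where ts: "set ts \<subseteq> Tsub n d" "f = (\<lambda>x. \<Sum>t\<leftarrow>ts. (t x)^2)" using assms(1) SQ_def by blast
  let ?us = "map (\<lambda>t x. sqrt r * t x) ts"
  have "set ?us \<subseteq> Tsub n d" using ts(1) Tsub_scale by auto
  moreover have "(\<lambda>x. r * f x) = (\<lambda>x. \<Sum>t\<leftarrow>?us. (t x)^2)"
    unfolding ts(2) using assms(2)
    by (auto simp: o_def power_mult_distrib sum_list_const_mult[symmetric])
  ultimately show ?thesis unfolding SQ_def by blast
qed

lemma SQ_sum: assumes "\<And>j. j \<in> J \<Longrightarrow> SQ n d (f j)"
  shows "SQ n d (\<lambda>x. \<Sum>j\<in>J. f j x)"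
  using assms
proof (induction J rule: infinite_finite_induct)
  case (infinite A) then show ?case by (simp add: SQ_zero)
next
  case empty then show ?case by (simp add: SQ_zero)
next
  case (insert a A) then show ?case by (simp add: SQ_add)
qed

definition Gset :: "nat \<Rightarrow> nat \<Rightarrow> ((nat \<Rightarrow> real) \<Rightarrow> real) set" where
  "Gset n d = {f. f \<in> Wset n d \<and> SQ n d f}"

definition Lset :: "nat \<Rightarrow> nat \<Rightarrow> ((nat \<Rightarrow> real) \<Rightarrow> real) set" where
  "Lset n d = {f. \<exists>A B. A \<in> Gset n d \<and> B \<in> Gset n d \<and> f = (\<lambda>x. A x - B x)}"

lemma G_add: "f \<in> Gset n d \<Longrightarrow> g \<in> Gset n d \<Longrightarrow> (\<lambda>x. f x + g x) \<in> Gset n d"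
  unfolding Gset_def by (auto intro: W_add SQ_add)

lemma G_scale: "f \<in> Gset n d \<Longrightarrow> r \<ge> 0 \<Longrightarrow> (\<lambda>x. r * f x) \<in> Gset n d"
  unfolding Gset_def by (auto intro: W_scale SQ_scale)

lemma G_zero: "(\<lambda>x. 0) \<in> Gset n d"
  unfolding Gset_def by (auto intro: W_zero SQ_zero)

lemma L_add: assumes "f \<in> Lset n d" "g \<in> Lset n d" shows "(\<lambda>x. f x + g x) \<in> Lset n d"
proof -
  obtain A B where "A \<in> Gset n d" "B \<in> Gset n d" "f = (\<lambda>x. A x - B x)" using assms(1) Lset_def by blast
  moreover obtain A' B' where "A' \<in> Gset n d" "B' \<in> Gset n d" "g = (\<lambda>x. A' x - B' x)" using assms(2) Lset_def by blast
  ultimately show ?thesis unfolding Lset_def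
    by (intro CollectI exI[of _ "\<lambda>x. A x + A' x"] exI[of _ "\<lambda>x. B x + B' x"]) (auto intro: G_add)
qed

lemma L_scale: assumes "f \<in> Lset n d" shows "(\<lambda>x. r * f x) \<in> Lset n d"
proof -
  obtain A B where AB: "A \<in> Gset n d" "B \<in> Gset n d" "f = (\<lambda>x. A x - B x)" using assms(1) Lset_def by blast
  show ?thesis
  proof (cases "r \<ge> 0")
    case True
    then show ?thesis unfolding Lset_def using AB
      by (intro CollectI exI[of _ "\<lambda>x. r * A x"] exI[of _ "\<lambda>x. r * B x"]) (auto intro: G_scale simp: algebra_simps)
  next
    case False
    have "(\<lambda>x. (-r) * B x) \<in> Gset n d" "(\<lambda>x. (-r) * A x) \<in> Gset n d"
      using False AB G_scale[of B n d "-r"] G_scale[of A n d "-r"] by auto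
    then show ?thesis unfolding Lset_def using AB
      by (intro CollectI exI[of _ "\<lambda>x. (-r) * B x"] exI[of _ "\<lambda>x. (-r) * A x"]) (auto simp: algebra_simps)
  qed
qed

lemma L_diff: "A \<in> Gset n d \<Longrightarrow> B \<in> Gset n d \<Longrightarrow> (\<lambda>x. A x - B x) \<in> Lset n d"
  unfolding Lset_def by blast


lemma ex_perm01:
  fixes i j n :: nat
  assumes "i < n" "j < n" "i \<noteq> j" "1 < n"
  shows "\<exists>\<sigma>. \<sigma> permutes {..<n} \<and> \<sigma> 0 = i \<and> \<sigma> 1 = j"
proof -
  define k where "k = transpose 0 i j"
  have "0 < n" using assms by simp
  have k: "k < n" "k \<noteq> 0" using assms unfolding k_def by (auto simp: transpose_def)
  let ?\<sigma> = "transpose 0 i \<circ> transpose 1 k"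
  have "?\<sigma> permutes {..<n}"
    by (rule permutes_compose) (use assms k \<open>0 < n\<close> in \<open>auto intro!: permutes_swap_id\<close>)
  moreover have "?\<sigma> 0 = i" using k by (auto simp: transpose_def)
  moreover have "?\<sigma> 1 = j" using assms unfolding k_def by (auto simp: transpose_def)
  ultimately show ?thesis by blast
qed

lemma K_eq:
  fixes \<alpha> \<beta> :: "nat \<Rightarrow> real"
  shows "(\<Sum>i<n. \<Sum>j<n. (\<alpha> i - \<alpha> j) * (\<beta> i - \<beta> j)) = 2 * n * (\<Sum>i<n. \<alpha> i * \<beta> i) - 2 * (\<Sum>i<n. \<alpha> i) * (\<Sum>i<n. \<beta> i)"
proof -
  have "(\<Sum>i<n. \<Sum>j<n. (\<alpha> i - \<alpha> j) * (\<beta> i - \<beta> j)) =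
        (\<Sum>i<n. \<Sum>j<n. \<alpha> i * \<beta> i) - (\<Sum>i<n. \<Sum>j<n. \<alpha> i * \<beta> j) - (\<Sum>i<n. \<Sum>j<n. \<alpha> j * \<beta> i) + (\<Sum>i<n. \<Sum>j<n. \<alpha> j * \<beta> j)"
    by (simp add: algebra_simps sum.distrib sum_subtractf)
  also have "\<dots> = 2 * real n * (\<Sum>i<n. \<alpha> i * \<beta> i) - 2 * (\<Sum>i<n. \<alpha> i) * (\<Sum>i<n. \<beta> i)"
    by (simp add: sum_product[symmetric] sum.swap[of "\<lambda>i j. \<alpha> j * \<beta> i"] sum_distrib_left[symmetric] sum_distrib_right[symmetric] algebra_simps)
  finally show ?thesis .
qed

lemma sq_expand:
  fixes \<alpha> \<beta> :: "nat \<Rightarrow> real"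
  shows "(\<Sum>i<n. \<Sum>j<n. ((\<alpha> i - \<alpha> j) * U + (\<beta> i - \<beta> j) * W)^2) =
    U^2 * (\<Sum>i<n. \<Sum>j<n. (\<alpha> i - \<alpha> j) * (\<alpha> i - \<alpha> j)) + 2 * U * W * (\<Sum>i<n. \<Sum>j<n. (\<alpha> i - \<alpha> j) * (\<beta> i - \<beta> j))
    + W^2 * (\<Sum>i<n. \<Sum>j<n. (\<beta> i - \<beta> j) * (\<beta> i - \<beta> j))"
proof -
  have e: "((\<alpha> i - \<alpha> j) * U + (\<beta> i - \<beta> j) * W)^2 = U^2 * ((\<alpha> i - \<alpha> j) * (\<alpha> i - \<alpha> j)) + 2 * U * W * ((\<alpha> i - \<alpha> j) * (\<beta> i - \<beta> j))
    + W^2 * ((\<beta> i - \<beta> j) * (\<beta> i - \<beta> j))" for i j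
    by (simp add: power2_eq_square algebra_simps)
  show ?thesis unfolding e by (simp only: sum.distrib sum_distrib_left)
qed


lemma sym_Tsub: "f \<in> sym_forms n d \<Longrightarrow> f \<in> Tsub n d"
  by (rule Tsub_Tgens) (simp add: Tgens_def)

lemma caseA:
  assumes "0 \<notin> set u" "0 \<notin> set v" "sum_list u = d" "sum_list v = d"
  shows "pmean_part n (u @ v) \<in> Lset n d"
proof -
  let ?U = "pmean_part n u" and ?V = "pmean_part n v"
  have U: "?U \<in> sym_forms n d" and V: "?V \<in> sym_forms n d" using pp_sym assms by metis+
  have tp: "(\<lambda>x. ?U x + ?V x) \<in> Tsub n d"
    by (rule sym_Tsub, rule sym_add[OF U V])
  have tm: "(\<lambda>x. ?U x + (-1) * ?V x) \<in> Tsub n d"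
    by (rule sym_Tsub, rule sym_add[OF U sym_scale[OF V]])
  have Wuu: "pmean_part n (u@u) \<in> Wset n d" and Wuv: "pmean_part n (u@v) \<in> Wset n d"
    and Wvv: "pmean_part n (v@v) \<in> Wset n d"
    by (rule W_list; use assms in auto)+
  have e1: "(\<lambda>x. (?U x + ?V x)^2) = (\<lambda>x. pmean_part n (u@u) x + (2 * pmean_part n (u@v) x + pmean_part n (v@v) x))"
    by (simp add: pp_append power2_eq_square algebra_simps)
  have e2: "(\<lambda>x. (?U x + (-1) * ?V x)^2) = (\<lambda>x. pmean_part n (u@u) x + ((-2) * pmean_part n (u@v) x + pmean_part n (v@v) x))"
    by (simp add: pp_append power2_eq_square algebra_simps)
  have G1: "(\<lambda>x. (?U x + ?V x)^2) \<in> Gset n d"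
    unfolding Gset_def mem_Collect_eq using SQ_sq[OF tp] W_add[OF Wuu W_add[OF W_scale[OF Wuv, of 2] Wvv]] unfolding e1 by blast
  have G2: "(\<lambda>x. (?U x + (-1) * ?V x)^2) \<in> Gset n d"
    unfolding Gset_def mem_Collect_eq using SQ_sq[OF tm] W_add[OF Wuu W_add[OF W_scale[OF Wuv, of "-2"] Wvv]] unfolding e2 by blast
  have "(\<lambda>x. (1/4) * ((\<lambda>x. (?U x + ?V x)^2 - (?U x + (-1) * ?V x)^2) x)) \<in> Lset n d"
    by (rule L_scale, rule L_diff[OF G1 G2])
  moreover have "(\<lambda>x. (1/4) * ((\<lambda>x. (?U x + ?V x)^2 - (?U x + (-1) * ?V x)^2) x)) = pmean_part n (u @ v)"
    by (auto simp: pp_append power2_eq_square algebra_simps)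
  ultimately show ?thesis by simp
qed


lemma Kp:
  assumes "n > 0"
  shows "(\<Sum>i<n. \<Sum>j<n. ((x::nat\<Rightarrow>real) i ^ a - x j ^ a) * (x i ^ b - x j ^ b)) =
    2 * (real n)^2 * (pmean n (a+b) x - pmean n a x * pmean n b x)"
proof -
  have P: "(\<Sum>i<n. x i ^ k) = real n * pmean n k x" for k using assms by (simp add: pmean_def)
  show ?thesis unfolding K_eq by (simp add: power_add[symmetric] P power2_eq_square algebra_simps)
qed

lemma caseB:
  assumes n: "2 \<le> n" and ab: "1 \<le> a" "a \<le> d" "1 \<le> b" "b \<le> d"
    and uv: "0 \<notin> set u" "0 \<notin> set v" "sum_list u = d - a" "sum_list v = d - b"
  shows "(\<lambda>x. pmean_part n (u@v@[a+b]) x - pmean_part n (u@v@[a,b]) x) \<in> Lset n d"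
proof -
  let ?U = "pmean_part n u" and ?V = "pmean_part n v"
  have U: "?U \<in> sym_forms n (d-a)" and V: "?V \<in> sym_forms n (d-b)" using pp_sym uv by metis+
  define t where "t s i j = (\<lambda>x::nat\<Rightarrow>real. (x i^a - x j^a) * ?U x + (x i^b - x j^b) * (s * ?V x))" for s :: real and i j :: nat
  have tT: "t s i j \<in> Tsub n d" if ij: "i < n" "j < n" for s i j
  proof (cases "i = j")
    case True
    then show ?thesis using Tsub_zero by (simp add: t_def)
  next
    case False
    then obtain \<sigma> where \<sigma>: "\<sigma> permutes {..<n}" "\<sigma> 0 = i" "\<sigma> 1 = j"
      using ex_perm01[OF ij False] n by auto
    define g0 where "g0 = (\<lambda>y::nat\<Rightarrow>real. (y 0^a - y 1^a) * ?U y)"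
    define g1 where "g1 = (\<lambda>y::nat\<Rightarrow>real. (y 0^b - y 1^b) * ?V y)"
    have g0: "g0 \<in> Tgens n d" unfolding Tgens_def g0_def using ab U by (intro UnI2 CollectI exI[of _ a] exI[of _ ?U]) auto
    have g1: "g1 \<in> Tgens n d" unfolding Tgens_def g1_def using ab V by (intro UnI2 CollectI exI[of _ b] exI[of _ ?V]) auto
    have eq: "t s i j = (\<lambda>x. \<Sum>k<(2::nat). (if k = 0 then 1 else s) * (if k = 0 then g0 else g1) (x \<circ> (\<lambda>_. \<sigma>) k))"
      by (auto simp: t_def g0_def g1_def numeral_2_eq_2 \<sigma> \<sigma>(3)[unfolded One_nat_def] pp_perm[OF \<sigma>(1)] algebra_simps)
    show ?thesis unfolding Tsub_def
      by (rule CollectI, rule exI[of _ 2], rule exI[of _ "\<lambda>k. if k = 0 then 1 else s"],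
          rule exI[of _ "\<lambda>_. \<sigma>"], rule exI[of _ "\<lambda>k. if k = 0 then g0 else g1"])
         (use eq g0 g1 \<sigma> in auto)
  qed
  define S where "S s = (\<lambda>x. \<Sum>i<n. \<Sum>j<n. (t s i j x)^2)" for s
  have SQS: "SQ n d (S s)" for s
    unfolding S_def by (intro SQ_sum SQ_sq tT) auto
  have n0: "n > 0" using n by simp
  let ?p = "\<lambda>l. pmean_part n l"
  have Sform: "S s = (\<lambda>x. 2 * (real n)^2 * ((?p (u@u@[a+a]) x - ?p (u@u@[a,a]) x)
     + (2 * s) * (?p (u@v@[a+b]) x - ?p (u@v@[a,b]) x) + s^2 * (?p (v@v@[b+b]) x - ?p (v@v@[b,b]) x)))" for s
  proof
    fix x
    have "S s x = ?U x ^2 * (\<Sum>i<n. \<Sum>j<n. (x i ^ a - x j ^ a) * (x i ^ a - x j ^ a))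
       + 2 * ?U x * (s * ?V x) * (\<Sum>i<n. \<Sum>j<n. (x i ^ a - x j ^ a) * (x i ^ b - x j ^ b))
       + (s * ?V x)^2 * (\<Sum>i<n. \<Sum>j<n. (x i ^ b - x j ^ b) * (x i ^ b - x j ^ b))"
      unfolding S_def t_def by (rule sq_expand)
    also have "\<dots> = 2 * (real n)^2 * ((?p (u@u@[a+a]) x - ?p (u@u@[a,a]) x)
     + (2 * s) * (?p (u@v@[a+b]) x - ?p (u@v@[a,b]) x) + s^2 * (?p (v@v@[b+b]) x - ?p (v@v@[b,b]) x))"
      unfolding Kp[OF n0] by (simp add: pp_append pp_Cons pp_Nil power2_eq_square algebra_simps)
    finally show "S s x = 2 * (real n)^2 * ((?p (u@u@[a+a]) x - ?p (u@u@[a,a]) x)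
     + (2 * s) * (?p (u@v@[a+b]) x - ?p (u@v@[a,b]) x) + s^2 * (?p (v@v@[b+b]) x - ?p (v@v@[b,b]) x))" .
  qed
  have WL: "?p l \<in> Wset n d" if "l \<in> {u@u@[a+a], u@u@[a,a], u@v@[a+b], u@v@[a,b], v@v@[b+b], v@v@[b,b]}" for l
    by (rule W_list) (use that uv ab in auto)
  have WS: "S s \<in> Wset n d" for s
    unfolding Sform
    by (intro W_scale W_add W_diff WL) auto
  have GS: "S s \<in> Gset n d" for s using WS SQS by (simp add: Gset_def)
  have "(\<lambda>x. (1 / (8 * (real n)^2)) * ((\<lambda>x. S 1 x - S (-1) x) x)) \<in> Lset n d"
    by (rule L_scale, rule L_diff[OF GS GS])
  moreover have "(\<lambda>x. (1 / (8 * (real n)^2)) * ((\<lambda>x. S 1 x - S (-1) x) x)) =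
     (\<lambda>x. pmean_part n (u@v@[a+b]) x - pmean_part n (u@v@[a,b]) x)"
    unfolding Sform using n0 by (auto simp: field_simps)
  ultimately show ?thesis by simp
qed


lemma comb:
  fixes l :: "nat list" and d :: nat
  assumes l: "0 \<notin> set l" "sum_list l = 2*d"
  shows "(\<exists>u v. mset l = mset (u@v) \<and> 0 \<notin> set u \<and> 0 \<notin> set v \<and> sum_list u = d \<and> sum_list v = d) \<or>
         (\<exists>u v a b. mset l = mset (u@v@[a+b]) \<and> 1 \<le> a \<and> a \<le> d \<and> 1 \<le> b \<and> b \<le> d \<and>
             0 \<notin> set u \<and> 0 \<notin> set v \<and> sum_list u = d - a \<and> sum_list v = d - b)"
proof (cases "l = []")
  case True
  then have "d = 0" using l by simp
  then show ?thesis using True by auto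
next
  case False
  define c where "c = Max (set l)"
  have cl: "c \<in> set l" using False unfolding c_def by simp
  define R where "R = remove1 c l"
  have mR: "mset l = mset (c # R)" unfolding R_def using cl by simp
  have sR: "c + sum_list R = 2*d" using l(2) mR by (metis sum_mset_sum_list sum_list.Cons)
  have setR: "set R \<subseteq> set l" unfolding R_def by (rule set_remove1_subset)
  have Rle: "y \<le> c" if "y \<in> set R" for y using setR that unfolding c_def by auto
  have R0: "0 \<notin> set R" using setR l(1) by auto
  have c1: "c \<ge> 1" using cl l(1) by (cases "c = 0") auto
  have d1: "d \<ge> 1" using sR c1 by simp
  define P where "P k \<longleftrightarrow> d + 1 \<le> c + sum_list (take k R)" for k
  have PL: "P (length R)" unfolding P_def using sR d1 by simp
  define k where "k = (LEAST k. P k)"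
  have Pk: "P k" unfolding k_def using PL by (rule LeastI)
  have kle: "k \<le> length R" unfolding k_def using PL by (rule Least_le)
  define s where "s = sum_list (take k R)"
  have s1: "d + 1 \<le> c + s" using Pk unfolding P_def s_def .
  have sd: "s \<le> d"
  proof (cases k)
    case 0 then show ?thesis by (simp add: s_def)
  next
    case (Suc k')
    have "\<not> P k'" unfolding k_def using not_less_Least[of k' P] Suc k_def by simp
    hence a: "c + sum_list (take k' R) \<le> d" unfolding P_def by simp
    have "k' < length R" using kle Suc by simp
    hence "take k R = take k' R @ [R ! k']" using Suc by (simp add: take_Suc_conv_app_nth)
    moreover have "R ! k' \<le> c" using \<open>k' < length R\<close> Rle by simp
    ultimately show ?thesis using a by (simp add: s_def)
  qed
  have sdrop: "s + sum_list (drop k R) = sum_list R" unfolding s_def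
    by (metis append_take_drop_id sum_list_append)
  have u0: "0 \<notin> set (take k R)" using R0 by (meson in_set_takeD)
  have v0: "0 \<notin> set (drop k R)" using R0 by (meson in_set_dropD)
  show ?thesis
  proof (cases "s = d")
    case True
    have "mset l = mset (take k R @ (c # drop k R))"
      using mR by (metis append_take_drop_id mset.simps(2) mset_append union_mset_add_mset_right)
    moreover have "sum_list (c # drop k R) = d" using sdrop sR True by simp
    ultimately show ?thesis using u0 v0 True c1 s_def by (intro disjI1 exI[of _ "take k R"] exI[of _ "c # drop k R"]) auto
  next
    case False
    hence sd': "s < d" using sd by simp
    define a where "a = d - s"
    define b where "b = c + s - d"
    have ab: "a + b = c" using sd' s1 unfolding a_def b_def by simp
    have "mset l = mset (take k R @ drop k R @ [a+b])"
    proof -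
      have td: "mset (take k R) + mset (drop k R) = mset R" by (metis append_take_drop_id mset_append)
      have "mset (take k R @ drop k R @ [a+b]) = mset ((take k R @ drop k R) @ [c])" using ab td by simp
      also have "\<dots> = add_mset c (mset R)" by (simp only: append_take_drop_id) simp
      finally show ?thesis using mR by simp
    qed
    moreover have "sum_list (drop k R) = d - b" using sdrop sR s1 sd' unfolding b_def by simp
    moreover have "b \<le> d" using sdrop sR unfolding b_def by simp
    ultimately show ?thesis using u0 v0 sd' s1 s_def
      by (intro disjI2 exI[of _ "take k R"] exI[of _ "drop k R"] exI[of _ a] exI[of _ b]) (auto simp: a_def b_def)
  qed
qed


lemma all_in_L:
  fixes n d :: nat
  assumes n: "n \<ge> 2 * d"
  shows "0 \<notin> set l \<Longrightarrow> sum_list l = 2*d \<Longrightarrow> pmean_part n l \<in> Lset n d"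
proof (induction "2*d - length l" arbitrary: l rule: less_induct)
  case less
  from comb[OF less.prems] show ?case
  proof
    assume "\<exists>u v. mset l = mset (u@v) \<and> 0 \<notin> set u \<and> 0 \<notin> set v \<and> sum_list u = d \<and> sum_list v = d"
    then obtain u v where h: "mset l = mset (u@v)" "0 \<notin> set u" "0 \<notin> set v" "sum_list u = d" "sum_list v = d" by blast
    show ?thesis using caseA[OF h(2-5), of n] pp_mset[OF h(1), of n] by simp
  next
    assume "\<exists>u v a b. mset l = mset (u@v@[a+b]) \<and> 1 \<le> a \<and> a \<le> d \<and> 1 \<le> b \<and> b \<le> d \<and>
             0 \<notin> set u \<and> 0 \<notin> set v \<and> sum_list u = d - a \<and> sum_list v = d - b"
    then obtain u v a b where h: "mset l = mset (u@v@[a+b])" "1 \<le> a" "a \<le> d" "1 \<le> b" "b \<le> d"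
      "0 \<notin> set u" "0 \<notin> set v" "sum_list u = d - a" "sum_list v = d - b" by blast
    let ?l' = "u@v@[a,b]"
    have l'0: "0 \<notin> set ?l'" using h by auto
    have l's: "sum_list ?l' = 2*d" using h by simp
    have len: "length l = length (u@v@[a+b])" using h(1) by (metis size_mset)
    have "length ?l' \<le> 2*d" using length_le_sum[OF l'0] l's by simp
    hence "2*d - length ?l' < 2*d - length l" using len by simp
    hence IH: "pmean_part n ?l' \<in> Lset n d" using less.hyps l'0 l's by blast
    have n2: "2 \<le> n" using n h by simp
    have D: "(\<lambda>x. pmean_part n (u@v@[a+b]) x - pmean_part n ?l' x) \<in> Lset n d"
      by (rule caseB[OF n2 h(2-9)])
    have "(\<lambda>x. (\<lambda>x. pmean_part n (u@v@[a+b]) x - pmean_part n ?l' x) x + pmean_part n ?l' x) \<in> Lset n d"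
      by (rule L_add[OF D IH])
    thus ?thesis using pp_mset[OF h(1), of n] by simp
  qed
qed

lemma SQ_cone: "SQ n d f \<Longrightarrow> \<exists>(m::nat) t. (\<forall>i<m. t i \<in> Tsub n d) \<and> f = (\<lambda>x. \<Sum>i<m. (t i x)^2)"
proof -
  assume "SQ n d f"
  then obtain ts where ts: "set ts \<subseteq> Tsub n d" "f = (\<lambda>x. \<Sum>t\<leftarrow>ts. (t x)^2)" unfolding SQ_def by blast
  have "f = (\<lambda>x. \<Sum>i<length ts. ((ts ! i) x)^2)"
    unfolding ts(2) by (auto simp: sum_list_sum_nth atLeast0LessThan)
  moreover have "\<forall>i<length ts. ts ! i \<in> Tsub n d" using ts(1) by auto
  ultimately show ?thesis by blast
qed

theorem lemma5p2:
  fixes n d :: nat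
  assumes "n \<ge> 2 * d"
  shows "\<exists>c0 :: nat list \<Rightarrow> real. \<exists>\<epsilon> > 0. \<forall>c :: nat list \<Rightarrow> real.
           (\<forall>lam\<in>partitions_of (2*d). \<bar>c lam - c0 lam\<bar> < \<epsilon>) \<longrightarrow>
           (\<lambda>x. \<Sum>lam\<in>partitions_of (2*d). c lam * pmean_part n lam x) \<in> sos_T_cone n d"
proof -
  let ?P = "partitions_of (2*d)"
  have "\<forall>lam\<in>?P. \<exists>A. \<exists>B. A \<in> Gset n d \<and> B \<in> Gset n d \<and> pmean_part n lam = (\<lambda>x. A x - B x)"
  proof
    fix lam assume "lam \<in> ?P"
    hence "pmean_part n lam \<in> Lset n d" using all_in_L[OF assms] by (auto simp: partitions_of_def)
    thus "\<exists>A. \<exists>B. A \<in> Gset n d \<and> B \<in> Gset n d \<and> pmean_part n lam = (\<lambda>x. A x - B x)"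
      unfolding Lset_def by blast
  qed
  then obtain A where "\<forall>lam\<in>?P. \<exists>B. A lam \<in> Gset n d \<and> B \<in> Gset n d \<and> pmean_part n lam = (\<lambda>x. A lam x - B x)"
    by (rule bchoice[THEN exE]) blast
  then obtain B where AB: "\<forall>lam\<in>?P. A lam \<in> Gset n d \<and> B lam \<in> Gset n d \<and> pmean_part n lam = (\<lambda>x. A lam x - B lam x)"
    by (rule bchoice[THEN exE]) blast
  have "(\<lambda>x. \<Sum>lam\<in>?P. A lam x + B lam x) \<in> Wset n d"
    using AB by (intro W_sum W_add) (auto simp: Gset_def)
  then obtain q where q: "(\<lambda>x. \<Sum>lam\<in>?P. A lam x + B lam x) = (\<lambda>x. \<Sum>lam\<in>?P. q lam * pmean_part n lam x)"
    unfolding Wset_def by blast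
  show ?thesis
  proof (intro exI[of _ q] exI[of _ "1::real"] conjI allI impI)
    fix c :: "nat list \<Rightarrow> real"
    assume c: "\<forall>lam\<in>?P. \<bar>c lam - q lam\<bar> < 1"
    let ?f = "\<lambda>x. \<Sum>lam\<in>?P. c lam * pmean_part n lam x"
    have sym: "?f \<in> sym_forms n (2*d)"
    proof (intro sym_sum sym_scale)
      fix lam assume "lam \<in> ?P"
      hence "sum_list lam = 2*d" by (simp add: partitions_of_def)
      thus "pmean_part n lam \<in> sym_forms n (2*d)" using pp_sym[of n lam] by simp
    qed
    have feq: "?f = (\<lambda>x. \<Sum>lam\<in>?P. (1 + (c lam - q lam)) * A lam x + (1 - (c lam - q lam)) * B lam x)"
    proof
      fix x
      have "?f x = (\<Sum>lam\<in>?P. q lam * pmean_part n lam x) + (\<Sum>lam\<in>?P. (c lam - q lam) * pmean_part n lam x)"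
        by (simp add: sum.distrib[symmetric] algebra_simps)
      also have "\<dots> = (\<Sum>lam\<in>?P. A lam x + B lam x) + (\<Sum>lam\<in>?P. (c lam - q lam) * (A lam x - B lam x))"
        using fun_cong[OF q, of x] AB by (auto intro!: sum.cong)
      also have "\<dots> = (\<Sum>lam\<in>?P. (1 + (c lam - q lam)) * A lam x + (1 - (c lam - q lam)) * B lam x)"
        by (simp add: sum.distrib[symmetric] algebra_simps)
      finally show "?f x = (\<Sum>lam\<in>?P. (1 + (c lam - q lam)) * A lam x + (1 - (c lam - q lam)) * B lam x)" .
    qed
    have "SQ n d ?f"
      unfolding feq
    proof (intro SQ_sum SQ_add SQ_scale)
      fix lam assume "lam \<in> ?P"
      thus "SQ n d (A lam)" "SQ n d (B lam)" "0 \<le> 1 + (c lam - q lam)" "0 \<le> 1 - (c lam - q lam)"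
        using AB c by (auto simp: Gset_def abs_less_iff)
    qed
    thus "?f \<in> sos_T_cone n d"
      unfolding sos_T_cone_def using sym SQ_cone by blast
  qed simp
qed

end
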